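(* Let $M\in\mathcal S^{n\times n}$ be distinguished and such that $|J_M(U)|$ is odd for every two-element set $U\subseteq\{1,\dots,n\}$. Then there exist an integer $k$ with $2k\ge n$ and $g\in G_n$ such that $M'=gM$ has block form $M'=\begin{bmatrix}A&C\\C^t&B\end{bmatrix}$, where $A$ and $B$ are self-conjugate of degrees $k$ and $n-k$ respectively, and $r_1(M')=\dots=r_k(M')\ne r_{k+1}(M')=\dots=r_n(M')$.
   Context: $\mathcal S=\{0,1,2,3\}$ is the Klein four-group ($\mathbb Z_2$-vector space) with $x+x=0$, $1+2=3$, $1+3=2$, $2+3=1$; conjugation is the involution $\bar0=0,\bar1=1,\bar2=3,\bar3=2$. A square matrix is distinguished if it has $1$ on the diagonal and $2$ or $3$ off the diagonal, and self-conjugate if $A^t=\overline A$. $J_M(U)=\{j:\sum_{i\in U}M_{ij}=1\}$; $r_i(M)=\sum_jM_{ij}$ is the $i$-th row sum. $G_n=C_2\wr S_n$ acts on $\mathcal S^{n\times n}$: the $k$-th generator of $C_2^n$ conjugates the $k$-th column, and $\sigma\in S_n$ acts by $P_\sigma MP_\sigma^{-1}$ (simultaneous permutation of rows and columns). (When $k=n$ the inequality condition is vacuous.) *)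

theory Defs
  imports "HOL-Combinatorics.Permutations"
begin

datatype klein = K0 | K1 | K2 | K3

fun kadd :: "klein \<Rightarrow> klein \<Rightarrow> klein" where
  "kadd K0 y = y"
| "kadd x K0 = x"
| "kadd K1 K1 = K0" | "kadd K1 K2 = K3" | "kadd K1 K3 = K2"
| "kadd K2 K1 = K3" | "kadd K2 K2 = K0" | "kadd K2 K3 = K1"
| "kadd K3 K1 = K2" | "kadd K3 K2 = K1" | "kadd K3 K3 = K0"

instantiation klein :: comm_monoid_add
begin
definition zero_klein_def: "(0::klein) = K0"
definition plus_klein_def: "(x::klein) + y = kadd x y"
instance
proof
  fix a b c :: klein
  show "a + b + c = a + (b + c)" unfolding plus_klein_def
    by (cases a; cases b; cases c) simp_all
  show "a + b = b + a" unfolding plus_klein_def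
    by (cases a; cases b) simp_all
  show "0 + a = a" unfolding plus_klein_def zero_klein_def by simp
qed
end

fun kconj :: "klein \<Rightarrow> klein" where
  "kconj K0 = K0" | "kconj K1 = K1" | "kconj K2 = K3" | "kconj K3 = K2"

text \<open>n x n matrices over S are functions nat => nat => klein, indices 0..n-1
  (entries outside the range are irrelevant).\<close>
type_synonym kmat = "nat \<Rightarrow> nat \<Rightarrow> klein"

definition distinguished :: "nat \<Rightarrow> kmat \<Rightarrow> bool" where
  "distinguished n M \<longleftrightarrow> (\<forall>i<n. M i i = K1) \<and>
     (\<forall>i<n. \<forall>j<n. i \<noteq> j \<longrightarrow> M i j = K2 \<or> M i j = K3)"

definition J :: "nat \<Rightarrow> kmat \<Rightarrow> nat set \<Rightarrow> nat set" where
  "J n M U = {j. j < n \<and> (\<Sum>i\<in>U. M i j) = K1}"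

definition row_sum :: "nat \<Rightarrow> kmat \<Rightarrow> nat \<Rightarrow> klein" where
  "row_sum n M i = (\<Sum>j<n. M i j)"

definition self_conj_on :: "nat set \<Rightarrow> kmat \<Rightarrow> bool" where
  "self_conj_on I M \<longleftrightarrow> (\<forall>i\<in>I. \<forall>j\<in>I. M j i = kconj (M i j))"

text \<open>The group G_n = C_2 wr S_n: pairs (eps, sigma), eps selecting the columns
  to be conjugated, sigma a permutation of {0..n-1}.\<close>
definition Gn :: "nat \<Rightarrow> ((nat \<Rightarrow> bool) \<times> (nat \<Rightarrow> nat)) set" where
  "Gn n = {(eps, \<sigma>). \<sigma> permutes {..<n} \<and> (\<forall>j\<ge>n. \<not> eps j)}"

text \<open>Action: first P_sigma M P_sigma^{-1}, then conjugate the selected columns.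
  (Every element of G_n is such a product.)\<close>
definition Gact :: "(nat \<Rightarrow> bool) \<times> (nat \<Rightarrow> nat) \<Rightarrow> kmat \<Rightarrow> kmat" where
  "Gact g M = (\<lambda>i j. let N = M (inv (snd g) i) (inv (snd g) j)
                     in if fst g j then kconj N else N)"

end

theory Submission
  imports Defs
begin

fun phi :: "klein \<Rightarrow> nat" where
  "phi K0 = 0" | "phi K1 = 1" | "phi K2 = 0" | "phi K3 = 1"
fun chi :: "klein \<Rightarrow> nat" where
  "chi K0 = 0" | "chi K1 = 0" | "chi K2 = 1" | "chi K3 = 1"

lemma phi_add: "phi (x + y) mod 2 = (phi x + phi y) mod 2"
  unfolding plus_klein_def by (cases x; cases y) simp_all
lemma chi_add: "chi (x + y) mod 2 = (chi x + chi y) mod 2"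
  unfolding plus_klein_def by (cases x; cases y) simp_all

lemma phi_sum: "finite A \<Longrightarrow> phi (sum f A) mod 2 = (\<Sum>j\<in>A. phi (f j)) mod 2"
proof (induction A rule: finite_induct)
  case empty then show ?case by (simp add: zero_klein_def)
next
  case (insert x F)
  have "phi (sum f (insert x F)) mod 2 = (phi (f x) + phi (sum f F)) mod 2"
    using insert by (simp add: phi_add)
  also have "\<dots> = (phi (f x) + (\<Sum>j\<in>F. phi (f j))) mod 2"
    using insert by (metis mod_add_right_eq)
  finally show ?case using insert by simp
qed

lemma chi_sum: "finite A \<Longrightarrow> chi (sum f A) mod 2 = (\<Sum>j\<in>A. chi (f j)) mod 2"
proof (induction A rule: finite_induct)
  case empty then show ?case by (simp add: zero_klein_def)
next
  case (insert x F)
  have "chi (sum f (insert x F)) mod 2 = (chi (f x) + chi (sum f F)) mod 2"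
    using insert by (simp add: chi_add)
  also have "\<dots> = (chi (f x) + (\<Sum>j\<in>F. chi (f j))) mod 2"
    using insert by (metis mod_add_right_eq)
  finally show ?case using insert by simp
qed

lemma klein_eq: "x = y \<longleftrightarrow> phi x mod 2 = phi y mod 2 \<and> chi x mod 2 = chi y mod 2"
  by (cases x; cases y) simp_all

definition ss :: "nat \<Rightarrow> kmat \<Rightarrow> nat \<Rightarrow> nat" where
  "ss n M a = (\<Sum>j<n. phi (M a j))"

lemma chi_row:
  assumes "distinguished n M" "a < n"
  shows "(\<Sum>j<n. chi (M a j)) = n - 1"
proof -
  have "(\<Sum>j<n. chi (M a j)) = chi (M a a) + (\<Sum>j\<in>{..<n}-{a}. chi (M a j))"
    using assms(2) by (simp add: sum.remove)
  also have "(\<Sum>j\<in>{..<n}-{a}. chi (M a j)) = (\<Sum>j\<in>{..<n}-{a}. 1)"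
    apply (rule sum.cong, simp)
    using assms unfolding distinguished_def by (metis DiffE chi.simps(3,4) insertCI lessThan_iff)
  finally show ?thesis using assms unfolding distinguished_def by simp
qed

lemma row_eq:
  assumes "distinguished n M" "a < n" "b < n"
  shows "row_sum n M a = row_sum n M b \<longleftrightarrow> even (ss n M a) = even (ss n M b)"
proof -
  have p: "phi (row_sum n M x) mod 2 = ss n M x mod 2" for x
    unfolding row_sum_def ss_def by (simp add: phi_sum)
  have c: "chi (row_sum n M x) mod 2 = (n - 1) mod 2" if "x < n" for x
    unfolding row_sum_def using chi_sum[of "{..<n}"] chi_row[OF assms(1) that] by simp
  show ?thesis unfolding klein_eq[of "row_sum n M a"] p c[OF assms(2)] c[OF assms(3)]
    by presburger
qed

lemma key:
  assumes d: "distinguished n M" and ab: "a < n" "b < n" "a \<noteq> b"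
    and od: "odd (card (J n M {a,b}))"
  shows "odd (ss n M a + ss n M b + phi (M a b) + phi (M b a))"
proof -
  define ind where "ind j = (if M a j + M b j = K1 then 1 else (0::nat))" for j
  define corr where "corr j = (if j = a then 1 + phi (M b a) else 0)
      + (if j = b then 1 + phi (M a b) else (0::nat))" for j
  have "J n M {a,b} = {j \<in> {..<n}. M a j + M b j = K1}"
    unfolding J_def using ab by auto
  hence cJ: "card (J n M {a,b}) = (\<Sum>j<n. ind j)"
    unfolding ind_def by (simp add: sum.If_cases Int_def conj_commute)
  have ev: "even (phi (M a j) + phi (M b j) + ind j + corr j)" if "j < n" for j
  proof -
    have D: "\<And>i k. i < n \<Longrightarrow> k < n \<Longrightarrow> i \<noteq> k \<Longrightarrow> M i k = K2 \<or> M i k = K3"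
      "\<And>i. i < n \<Longrightarrow> M i i = K1" using d unfolding distinguished_def by auto
    show ?thesis
    proof (cases "j = a")
      case True
      then show ?thesis using D(1)[of b a] D(2)[of a] ab
        unfolding ind_def corr_def plus_klein_def by auto
    next
      case False
      show ?thesis
      proof (cases "j = b")
        case True
        then show ?thesis using D(1)[of a b] D(2)[of b] ab False
          unfolding ind_def corr_def plus_klein_def by auto
      next
        case False2: False
        then show ?thesis using D(1)[of a j] D(1)[of b j] ab False that
          unfolding ind_def corr_def plus_klein_def by auto
      qed
    qed
  qed
  have "even (\<Sum>j<n. phi (M a j) + phi (M b j) + ind j + corr j)"
    by (rule dvd_sum) (use ev in auto)
  moreover have "(\<Sum>j<n. corr j) = 2 + phi (M b a) + phi (M a b)"
    unfolding corr_def using ab by (simp add: sum.distrib)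
  ultimately have "even (ss n M a + ss n M b + card (J n M {a,b}) + 2 + phi (M b a) + phi (M a b))"
    unfolding ss_def cJ by (simp add: sum.distrib add.assoc)
  with od show ?thesis by presburger
qed


lemma pair:
  assumes d: "distinguished n M" and ab: "a < n" "b < n" "a \<noteq> b"
    and h: "\<forall>U. U \<subseteq> {..<n} \<and> card U = 2 \<longrightarrow> odd (card (J n M U))"
  shows "(even (ss n M a) = even (ss n M b)) \<Longrightarrow> M b a = kconj (M a b)"
    and "(even (ss n M a) \<noteq> even (ss n M b)) \<Longrightarrow> M b a = M a b"
proof -
  have "odd (card (J n M {a,b}))" using h ab by auto
  hence o: "odd (ss n M a + ss n M b + phi (M a b) + phi (M b a))" using key[OF d ab] by blast
  have D: "M a b = K2 \<or> M a b = K3" "M b a = K2 \<or> M b a = K3"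
    using d ab unfolding distinguished_def by auto
  have E: "(even (ss n M a) = even (ss n M b)) \<longleftrightarrow> odd (phi (M a b) + phi (M b a))"
    using o by presburger
  show "(even (ss n M a) = even (ss n M b)) \<Longrightarrow> M b a = kconj (M a b)"
    using E D by auto
  show "(even (ss n M a) \<noteq> even (ss n M b)) \<Longrightarrow> M b a = M a b"
    using E D by auto
qed

theorem mainTheorem11:
  fixes n :: nat and M :: kmat
  assumes "distinguished n M"
    and "\<forall>U. U \<subseteq> {..<n} \<and> card U = 2 \<longrightarrow> odd (card (J n M U))"
  shows "\<exists>k g. n \<le> 2 * k \<and> k \<le> n \<and> g \<in> Gn n \<and>
     (let M' = Gact g M in
        (\<forall>i\<in>{k..<n}. \<forall>j<k. M' i j = M' j i) \<and>
        self_conj_on {..<k} M' \<and> self_conj_on {k..<n} M' \<and>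
        (\<forall>i<k. \<forall>j<k. row_sum n M' i = row_sum n M' j) \<and>
        (\<forall>i\<in>{k..<n}. \<forall>j\<in>{k..<n}. row_sum n M' i = row_sum n M' j) \<and>
        (\<forall>i<k. \<forall>j\<in>{k..<n}. row_sum n M' i \<noteq> row_sum n M' j))"
proof -
  define c where "c = (n \<le> 2 * card {i\<in>{..<n}. even (ss n M i)})"
  define X where "X = {i\<in>{..<n}. even (ss n M i) = c}"
  define Y where "Y = {i\<in>{..<n}. even (ss n M i) \<noteq> c}"
  define k where "k = card X"
  have fX: "finite X" "finite Y" unfolding X_def Y_def by auto
  have XY: "X \<inter> Y = {}" "X \<union> Y = {..<n}" unfolding X_def Y_def by auto
  have cXY: "card X + card Y = n" using card_Un_disjoint[OF fX XY(1)] XY(2) by simp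
  have nk: "n \<le> 2 * k"
  proof (cases c)
    case True then show ?thesis unfolding k_def X_def c_def by simp
  next
    case False
    have "Y = {i\<in>{..<n}. even (ss n M i)}" unfolding Y_def using False by auto
    then show ?thesis using False cXY unfolding k_def c_def by simp
  qed
  define xs where "xs = sorted_list_of_set X @ sorted_list_of_set Y"
  have lx: "length xs = n" unfolding xs_def using cXY fX by simp
  have dx: "distinct xs" unfolding xs_def using fX XY(1) by simp
  have sx: "set xs = {..<n}" unfolding xs_def using fX XY(2) by simp
  define \<tau> where "\<tau> i = (if i < n then xs ! i else i)" for i
  have bt: "bij_betw \<tau> {..<n} {..<n}"
  proof -
    have "bij_betw ((!) xs) {..<n} {..<n}" using bij_betw_nth[OF dx] lx sx by simp
    then show ?thesis by (rule bij_betw_cong[THEN iffD1, rotated]) (simp add: \<tau>_def)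
  qed
  have pt: "\<tau> permutes {..<n}" by (rule bij_imp_permutes[OF bt]) (simp add: \<tau>_def)
  have tX: "\<tau> i \<in> X" if "i < k" for i
  proof -
    have "i < n" using that cXY k_def by simp
    then have "\<tau> i = sorted_list_of_set X ! i" unfolding \<tau>_def xs_def using that k_def fX
      by (simp add: nth_append)
    then show ?thesis using that k_def fX
      by (metis nth_mem set_sorted_list_of_set length_sorted_list_of_set)
  qed
  have tY: "\<tau> i \<in> Y" if "k \<le> i" "i < n" for i
  proof -
    have "\<tau> i = sorted_list_of_set Y ! (i - k)" unfolding \<tau>_def xs_def using that k_def fX
      by (simp add: nth_append)
    moreover have "i - k < card Y" using that cXY k_def by simp
    ultimately show ?thesis using fX
      by (metis nth_mem set_sorted_list_of_set length_sorted_list_of_set)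
  qed
  have tinj: "\<tau> i \<noteq> \<tau> j" if "i < n" "j < n" "i \<noteq> j" for i j
    using bt that unfolding bij_betw_def inj_on_def by auto
  have tlt: "\<tau> i < n" if "i < n" for i using bt that unfolding bij_betw_def by auto
  define g where "g = ((\<lambda>_::nat. False), inv \<tau>)"
  have gG: "g \<in> Gn n" unfolding g_def Gn_def using permutes_inv[OF pt] by simp
  have M': "Gact g M = (\<lambda>i j. M (\<tau> i) (\<tau> j))"
    unfolding Gact_def g_def using permutes_inv_inv[OF pt] by (simp add: Let_def)
  have rs: "row_sum n (Gact g M) i = row_sum n M (\<tau> i)" for i
    unfolding M' row_sum_def using sum.reindex_bij_betw[OF bt, of "\<lambda>j. M (\<tau> i) j"] by simp
  have inX: "\<And>x. x \<in> X \<Longrightarrow> x < n \<and> even (ss n M x) = c" unfolding X_def by auto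
  have inY: "\<And>x. x \<in> Y \<Longrightarrow> x < n \<and> even (ss n M x) \<noteq> c" unfolding Y_def by auto
  have kn: "k \<le> n" using cXY k_def by simp
  have P1: "\<forall>i\<in>{k..<n}. \<forall>j<k. M (\<tau> i) (\<tau> j) = M (\<tau> j) (\<tau> i)"
  proof (intro ballI allI impI)
    fix i j assume i: "i \<in> {k..<n}" and j: "j < k"
    have a: "\<tau> j \<in> X" "\<tau> i \<in> Y" using i j tX tY by auto
    then have "\<tau> j \<noteq> \<tau> i" using XY(1) by (metis IntI empty_iff)
    then show "M (\<tau> i) (\<tau> j) = M (\<tau> j) (\<tau> i)"
    proof -
      have u: "\<tau> j < n" "\<tau> i < n" "even (ss n M (\<tau> j)) \<noteq> even (ss n M (\<tau> i))"
        using inX[OF a(1)] inY[OF a(2)] by auto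
      show ?thesis using pair(2)[OF assms(1) u(1,2) \<open>\<tau> j \<noteq> \<tau> i\<close> assms(2) u(3)] by simp
    qed
  qed
  have P2: "self_conj_on {..<k} (\<lambda>i j. M (\<tau> i) (\<tau> j))"
    unfolding self_conj_on_def
  proof (intro ballI)
    fix i j assume i: "i \<in> {..<k}" and j: "j \<in> {..<k}"
    have a: "\<tau> j \<in> X" "\<tau> i \<in> X" using i j tX by auto
    show "M (\<tau> j) (\<tau> i) = kconj (M (\<tau> i) (\<tau> j))"
    proof (cases "i = j")
      case True then show ?thesis using assms(1) inX[OF a(1)] unfolding distinguished_def by simp
    next
      case False
      then have "\<tau> i \<noteq> \<tau> j" using tinj i j kn by auto
      then show ?thesis
      proof -
        have u: "\<tau> i < n" "\<tau> j < n" "even (ss n M (\<tau> i)) = even (ss n M (\<tau> j))"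
          using inX[OF a(1)] inX[OF a(2)] by auto
        show ?thesis using pair(1)[OF assms(1) u(1,2) \<open>\<tau> i \<noteq> \<tau> j\<close> assms(2) u(3)] by simp
      qed
    qed
  qed
  have P3: "self_conj_on {k..<n} (\<lambda>i j. M (\<tau> i) (\<tau> j))"
    unfolding self_conj_on_def
  proof (intro ballI)
    fix i j assume i: "i \<in> {k..<n}" and j: "j \<in> {k..<n}"
    have a: "\<tau> j \<in> Y" "\<tau> i \<in> Y" using i j tY by auto
    show "M (\<tau> j) (\<tau> i) = kconj (M (\<tau> i) (\<tau> j))"
    proof (cases "i = j")
      case True then show ?thesis using assms(1) inY[OF a(1)] unfolding distinguished_def by simp
    next
      case False
      then have "\<tau> i \<noteq> \<tau> j" using tinj i j by auto
      then show ?thesis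
      proof -
        have u: "\<tau> i < n" "\<tau> j < n" "even (ss n M (\<tau> i)) = even (ss n M (\<tau> j))"
          using inY[OF a(1)] inY[OF a(2)] by auto
        show ?thesis using pair(1)[OF assms(1) u(1,2) \<open>\<tau> i \<noteq> \<tau> j\<close> assms(2) u(3)] by simp
      qed
    qed
  qed
  have P4: "\<forall>i<k. \<forall>j<k. row_sum n M (\<tau> i) = row_sum n M (\<tau> j)"
  proof (intro allI impI)
    fix i j assume "i < k" "j < k"
    then have a: "\<tau> i \<in> X" "\<tau> j \<in> X" using tX by auto
    show "row_sum n M (\<tau> i) = row_sum n M (\<tau> j)"
      using inX[OF a(1)] inX[OF a(2)] row_eq[OF assms(1), of "\<tau> i" "\<tau> j"] by auto
  qed
  have P5: "\<forall>i\<in>{k..<n}. \<forall>j\<in>{k..<n}. row_sum n M (\<tau> i) = row_sum n M (\<tau> j)"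
  proof (intro ballI)
    fix i j assume "i \<in> {k..<n}" "j \<in> {k..<n}"
    then have "\<tau> i \<in> Y" "\<tau> j \<in> Y" using tY by auto
    then show "row_sum n M (\<tau> i) = row_sum n M (\<tau> j)"
      using inY row_eq[OF assms(1), of "\<tau> i" "\<tau> j"] by auto
  qed
  have P6: "\<forall>i<k. \<forall>j\<in>{k..<n}. row_sum n M (\<tau> i) \<noteq> row_sum n M (\<tau> j)"
  proof (intro allI impI ballI)
    fix i j assume "i < k" "j \<in> {k..<n}"
    then have "\<tau> i \<in> X" "\<tau> j \<in> Y" using tX tY by auto
    then show "row_sum n M (\<tau> i) \<noteq> row_sum n M (\<tau> j)"
      using inX[of "\<tau> i"] inY[of "\<tau> j"] row_eq[OF assms(1), of "\<tau> i" "\<tau> j"] by auto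
  qed
  show ?thesis
    apply (rule exI[of _ k], rule exI[of _ g])
    unfolding Let_def rs unfolding M' using nk kn gG P1 P2 P3 P4 P5 P6 by (intro conjI) assumption+
qed

end
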